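(* There is an absolute constant $c>0$ such that the following holds. Let $n\ge2$, let $\varepsilon\in[0,\frac{1}{2\ln n}]$, and let $P\subset\mathbb{H}^2$ be a set of $n$ points equally spaced (i.e., consecutive points subtending equal angles $2\pi/n$ at the centre) on a hyperbolic circle of radius $3\ln n$. Then every $(2+\varepsilon)$-spanner for $P$, i.e., every geometric graph $G$ with vertex set $P$ satisfying $\mathrm{dist}_G(u,v)\le(2+\varepsilon)|uv|$ for all $u,v\in P$, has at least $c\, n\log n$ edges.
   Context: $\mathbb{H}^2$ is the hyperbolic plane of curvature $-1$, $|uv|$ hyperbolic distance. A geometric graph has each edge weighted by the distance between its endpoints; $\mathrm{dist}_G$ is shortest-path length in $G$. *)

theory Defs
  imports "HOL-Analysis.Analysis"
begin

text \<open>Hyperbolic plane of curvature -1, modelled as the Poincare disk.\<close>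
definition hdisk :: "complex set" where
  "hdisk = {z. norm z < 1}"

definition hdist :: "complex \<Rightarrow> complex \<Rightarrow> real" where
  "hdist u v = arcosh (1 + 2 * (norm (u - v))^2 / ((1 - (norm u)^2) * (1 - (norm v)^2)))"

definition is_walk :: "complex set set \<Rightarrow> complex list \<Rightarrow> bool" where
  "is_walk E xs \<longleftrightarrow> xs \<noteq> [] \<and> (\<forall>i. Suc i < length xs \<longrightarrow> {xs ! i, xs ! Suc i} \<in> E)"

definition walk_length :: "complex list \<Rightarrow> real" where
  "walk_length xs = (\<Sum>i<length xs - 1. hdist (xs ! i) (xs ! Suc i))"

definition is_spanner :: "real \<Rightarrow> complex set \<Rightarrow> complex set set \<Rightarrow> bool" where
  "is_spanner t P E \<longleftrightarrow>
     (\<forall>e\<in>E. \<exists>u v. e = {u, v} \<and> u \<in> P \<and> v \<in> P \<and> u \<noteq> v) \<and>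
     (\<forall>u\<in>P. \<forall>v\<in>P. \<exists>xs. is_walk E xs \<and> hd xs = u \<and> last xs = v \<and>
                          walk_length xs \<le> t * hdist u v)"

end

theory Submission
  imports Defs
begin

lemma cos_ge_quad:
  fixes x :: real assumes "x \<ge> 0" shows "1 - x^2/2 \<le> cos x"
proof -
  let ?f = "\<lambda>x::real. cos x - 1 + x^2/2"
  have d: "\<And>u. (?f has_real_derivative (u - sin u)) (at u)"
    by (auto intro!: derivative_eq_intros simp: field_simps)
  have "\<And>u. \<lbrakk>0 \<le> u; u \<le> x\<rbrakk> \<Longrightarrow> \<exists>y. DERIV ?f u :> y \<and> y \<ge> 0"
    using d sin_x_le_x by fastforce
  then have "?f 0 \<le> ?f x"
    by (rule DERIV_nonneg_imp_nondecreasing [OF assms])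
  then show ?thesis by simp
qed

lemma sin_ge_cubic:
  fixes x :: real assumes "x \<ge> 0" shows "x - x^3/6 \<le> sin x"
proof -
  let ?f = "\<lambda>x::real. sin x - x + x^3/6"
  have d: "\<And>u. (?f has_real_derivative (cos u - 1 + u^2/2)) (at u)"
    by (auto intro!: derivative_eq_intros simp: field_simps power2_eq_square power3_eq_cube)
  have "\<And>u. \<lbrakk>0 \<le> u; u \<le> x\<rbrakk> \<Longrightarrow> \<exists>y. DERIV ?f u :> y \<and> y \<ge> 0"
    using d cos_ge_quad by fastforce
  then have "?f 0 \<le> ?f x"
    by (rule DERIV_nonneg_imp_nondecreasing [OF assms])
  then show ?thesis by simp
qed

lemma sin_ge_third:
  fixes x :: real assumes "0 \<le> x" "x \<le> 2" shows "x/3 \<le> sin x"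
proof -
  have "x^2 \<le> 2^2" using assms by (intro power_mono) auto
  then have "x * x^2 \<le> x * 4" using assms by (intro mult_left_mono) auto
  then have "x/3 \<le> x - x^3/6" by (simp add: power3_eq_cube power2_eq_square)
  with sin_ge_cubic[OF assms(1)] show ?thesis by linarith
qed

lemma norm_diff_cis: "(cmod (cis a - cis b))^2 = 4 * (sin ((a-b)/2))^2"
proof -
  have "(cmod (cis a - cis b))^2 = (cos a - cos b)^2 + (sin a - sin b)^2"
    by (simp add: cmod_power2)
  also have "\<dots> = 2 - 2 * cos (a - b)"
    by (simp add: cos_diff power2_eq_square algebra_simps)
  also have "cos (a - b) = 1 - 2 * (sin ((a-b)/2))^2"
  proof -
    have "cos (2 * ((a-b)/2)) = 1 - 2 * (sin ((a-b)/2))^2" by (rule cos_double_sin)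
    moreover have "2 * ((a-b)/2) = a - b" by simp
    ultimately show ?thesis by metis
  qed
  finally show ?thesis by simp
qed

lemma exp_arcosh_bounds:
  fixes y :: real assumes "y \<ge> 1" shows "y \<le> exp (arcosh y)" "exp (arcosh y) \<le> 2 * y"
proof -
  have s0: "0 \<le> sqrt (y^2 - 1)" using assms by simp
  have pos: "y + sqrt (y^2 - 1) > 0" using assms s0 by linarith
  have e: "exp (arcosh y) = y + sqrt (y^2 - 1)" using assms pos by (simp add: arcosh_real_def)
  have "sqrt (y^2 - 1) \<le> sqrt (y^2)" by (rule real_sqrt_le_mono) simp
  moreover have "sqrt (y^2) = y" using assms by simp
  ultimately have "sqrt (y^2 - 1) \<le> y" by simp
  then show "y \<le> exp (arcosh y)" "exp (arcosh y) \<le> 2 * y" using e s0 by auto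
qed

lemma hdist_circle:
  assumes "0 \<le> r" "r < 1"
  shows "hdist (complex_of_real r * cis a) (complex_of_real r * cis b)
       = arcosh (1 + 2 * (4 * r^2 / (1 - r^2)^2) * (sin ((a-b)/2))^2)"
proof -
  have "cmod (complex_of_real r * cis a - complex_of_real r * cis b) = r * cmod (cis a - cis b)"
    using assms by (simp add: right_diff_distrib[symmetric] norm_mult)
  then have n1: "(cmod (complex_of_real r * cis a - complex_of_real r * cis b))^2 = r^2 * (4 * (sin ((a-b)/2))^2)"
    by (simp add: power_mult_distrib norm_diff_cis)
  have n2: "cmod (complex_of_real r * cis a) = r" and n3: "cmod (complex_of_real r * cis b) = r"
    using assms by (simp_all add: norm_mult)
  have "r^2 < 1^2" by (rule power_strict_mono) (use assms in auto)
  then have nz: "1 - r^2 \<noteq> 0" by simp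
  show ?thesis unfolding hdist_def n1 n2 n3
    by (rule arg_cong[where f=arcosh]) (use nz in \<open>simp add: power2_eq_square field_simps\<close>)
qed


definition gap :: "nat \<Rightarrow> nat \<Rightarrow> nat \<Rightarrow> nat" where
  "gap n i j = nat (min \<bar>int i - int j\<bar> (int n - \<bar>int i - int j\<bar>))"

lemma gap_int: "i < n \<Longrightarrow> j < n \<Longrightarrow> int (gap n i j) = min \<bar>int i - int j\<bar> (int n - \<bar>int i - int j\<bar>)"
proof -
  assume "i < n" "j < n"
  then have "0 \<le> min \<bar>int i - int j\<bar> (int n - \<bar>int i - int j\<bar>)" by (simp add: min_def abs_if)
  then show ?thesis unfolding gap_def by simp
qed
lemma gap_le: "i < n \<Longrightarrow> j < n \<Longrightarrow> 2 * gap n i j \<le> n"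
proof -
  assume "i < n" "j < n"
  then have "int (2 * gap n i j) \<le> int n" using gap_int[of i n j] by (simp add: min_def)
  then show ?thesis by linarith
qed
lemma gap_pos: "i < n \<Longrightarrow> j < n \<Longrightarrow> i \<noteq> j \<Longrightarrow> 1 \<le> gap n i j"
proof -
  assume "i < n" "j < n" "i \<noteq> j"
  then have "int 1 \<le> int (gap n i j)" using gap_int[of i n j] by (simp add: min_def abs_if)
  then show ?thesis by linarith
qed
lemma gap_sym: "gap n i j = gap n j i" unfolding gap_def by (simp add: abs_minus_commute)

lemma tri_int: fixes I J K n :: int
  assumes "0 \<le> I" "I < n" "0 \<le> J" "J < n" "0 \<le> K" "K < n"
  shows "min \<bar>I - K\<bar> (n - \<bar>I - K\<bar>) \<le> min \<bar>I - J\<bar> (n - \<bar>I - J\<bar>) + min \<bar>J - K\<bar> (n - \<bar>J - K\<bar>)"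
  using assms unfolding min_def abs_if by (simp split: if_splits)

lemma gap_triangle: "i < n \<Longrightarrow> j < n \<Longrightarrow> k < n \<Longrightarrow> gap n i k \<le> gap n i j + gap n j k"
proof -
  assume a: "i < n" "j < n" "k < n"
  have "int (gap n i k) \<le> int (gap n i j) + int (gap n j k)"
    unfolding gap_int[OF a(1,3)] gap_int[OF a(1,2)] gap_int[OF a(2,3)]
    by (rule tri_int) (use a in auto)
  then show ?thesis by linarith
qed

lemma sin_sq_gap:
  assumes "i < n" "j < n"
  shows "(sin (pi * (real i - real j) / real n))^2 = (sin (pi * real (gap n i j) / real n))^2"
proof -
  define c where "c = \<bar>int i - int j\<bar>"
  have n0: "real n > 0" using assms by simp
  have rc: "real_of_int c = \<bar>real i - real j\<bar>" unfolding c_def by simp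
  have d1: "(sin (pi * (real i - real j) / real n))^2 = (sin (pi * real_of_int c / real n))^2"
  proof (cases "real i \<le> real j")
    case True
    then have "real_of_int c = - (real i - real j)" unfolding rc by simp
    then have "pi * real_of_int c / real n = - (pi * (real i - real j) / real n)" by (simp only:)
    then show ?thesis by simp
  next
    case False
    then have "real_of_int c = real i - real j" unfolding rc by simp
    then show ?thesis by simp
  qed
  have d2: "sin (pi * (real n - real_of_int c) / real n) = sin (pi * real_of_int c / real n)"
  proof -
    have "pi * (real n - real_of_int c) / real n = pi - pi * real_of_int c / real n"
      using n0 by (simp add: field_simps)
    then show ?thesis by simp
  qed
  have "int (gap n i j) = c \<or> int (gap n i j) = int n - c" unfolding gap_int[OF assms] c_def by (simp add: min_def)
  then have "real (gap n i j) = real_of_int c \<or> real (gap n i j) = real n - real_of_int c"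
    by (metis of_int_of_nat_eq of_int_diff)
  then show ?thesis using d1 d2 by auto
qed

lemma sin_gap_bounds:
  assumes "2 * g \<le> n" "n > 0"
  shows "real g / real n \<le> sin (pi * real g / real n)" "sin (pi * real g / real n) \<le> 4 * real g / real n"
proof -
  have n0: "real n > 0" using assms by simp
  have x0: "0 \<le> pi * real g / real n" by simp
  have "pi * real g / real n \<le> pi / 2" using assms n0 by (simp add: field_simps)
  then have x2: "pi * real g / real n \<le> 2" using pi_less_4 by linarith
  have "3 * real g \<le> pi * real g" by (rule mult_right_mono) (use pi_gt3 in auto)
  then have "real g / real n \<le> (pi * real g / real n) / 3" using n0 by (simp add: field_simps)
  also have "\<dots> \<le> sin (pi * real g / real n)" by (rule sin_ge_third[OF x0 x2])
  finally show "real g / real n \<le> sin (pi * real g / real n)" .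
  have a1: "sin (pi * real g / real n) \<le> pi * real g / real n" by (rule sin_x_le_x[OF x0])
  have "pi * real g \<le> 4 * real g" by (rule mult_right_mono) (use pi_less_4 in auto)
  then have "pi * real g / real n \<le> 4 * real g / real n" using n0 by (simp add: divide_right_mono)
  with a1 show "sin (pi * real g / real n) \<le> 4 * real g / real n" by linarith
qed

lemma sin_sq_gap_bounds:
  assumes "i < n" "j < n"
  shows "(real (gap n i j) / real n)^2 \<le> (sin (pi * (real i - real j) / real n))^2"
        "(sin (pi * (real i - real j) / real n))^2 \<le> 16 * (real (gap n i j) / real n)^2"
proof -
  have n0: "n > 0" using assms by simp
  note b = sin_gap_bounds[OF gap_le[OF assms] n0]
  have z: "0 \<le> real (gap n i j) / real n" by simp
  show "(real (gap n i j) / real n)^2 \<le> (sin (pi * (real i - real j) / real n))^2"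
    unfolding sin_sq_gap[OF assms] by (rule power_mono[OF b(1) z])
  have "(sin (pi * real (gap n i j) / real n))^2 \<le> (4 * (real (gap n i j) / real n))^2"
    by (rule power_mono) (use b z in auto)
  moreover have "(4 * (real (gap n i j) / real n))^2 = 16 * (real (gap n i j) / real n)^2"
    by (simp only: power_mult_distrib) simp
  ultimately show "(sin (pi * (real i - real j) / real n))^2 \<le> 16 * (real (gap n i j) / real n)^2"
    unfolding sin_sq_gap[OF assms] by linarith
qed

definition pt :: "nat \<Rightarrow> real \<Rightarrow> real \<Rightarrow> nat \<Rightarrow> complex" where
  "pt n r \<alpha> k = complex_of_real r * cis (\<alpha> + 2 * pi * real k / real n)"

definition Aq :: "real \<Rightarrow> real" where "Aq r = 4 * r^2 / (1 - r^2)^2"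

context
  fixes n :: nat and r \<alpha> :: real
  assumes n2: "n \<ge> 2" and r0: "0 \<le> r" and r1: "r < 1"
    and hR: "hdist 0 (complex_of_real r) = 3 * ln (real n)"
begin

lemma Aq_eq: "Aq r = ((real n ^ 3 - 1 / real n ^ 3) / 2)^2"
proof -
  have "r^2 < 1^2" by (rule power_strict_mono) (use r0 r1 in auto)
  then have r2: "r^2 < 1" by simp
  define c where "c = 1 + 2 * r^2 / (1 - r^2)"
  have c1: "c \<ge> 1" unfolding c_def using r2 by simp
  have "hdist 0 (complex_of_real r) = arcosh c"
    unfolding hdist_def c_def using r0 by simp
  then have "arcosh c = 3 * ln (real n)" using hR by simp
  then have "cosh (arcosh c) = cosh (3 * ln (real n))" by simp
  then have cc: "c = cosh (3 * ln (real n))" using c1 by simp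
  have n0: "real n > 0" using n2 by simp
  have e1: "exp (3 * ln (real n)) = real n ^ 3"
  proof -
    have "3 * ln (real n) = ln (real n ^ 3)" using ln_realpow[of "real n" 3] by simp
    then show ?thesis using n0 by simp
  qed
  have e2: "exp (- (3 * ln (real n))) = 1 / real n ^ 3" using e1 by (simp add: exp_minus')
  have cN: "c = (real n ^ 3 + 1 / real n ^ 3) / 2" unfolding cc cosh_def e1 e2 by simp
  have q: "1 - r^2 > 0" using r2 by simp
  have "c = (1 + r^2) / (1 - r^2)" unfolding c_def using q by (simp add: field_simps)
  then have "c^2 - 1 = (1 + r^2)^2 / (1 - r^2)^2 - 1" by (simp add: power_divide)
  also have "\<dots> = ((1 + r^2)^2 - (1 - r^2)^2) / (1 - r^2)^2" using q by (simp add: field_simps)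
  also have "(1 + r^2)^2 - (1 - r^2)^2 = 4 * r^2" by (simp add: algebra_simps power2_eq_square)
  finally have "Aq r = c^2 - 1" unfolding Aq_def by simp
  also have "\<dots> = ((real n ^ 3 - 1 / real n ^ 3) / 2)^2" unfolding cN using n0
    by (simp add: field_simps power2_eq_square)
  finally show ?thesis .
qed

lemma Aq_bounds: "real n ^ 6 / 16 \<le> Aq r" "Aq r \<le> real n ^ 6 / 4"
proof -
  define N where "N = real n ^ 3"
  have "real n ^ 3 \<ge> 2 ^ 3" using n2 by (intro power_mono) auto
  then have N8: "N \<ge> 8" unfolding N_def by simp
  have N6: "real n ^ 6 = N^2" unfolding N_def by (simp flip: power_mult)
  have "8 * 8 \<le> N * N" using N8 by (intro mult_mono) auto
  then have "1 / N \<le> N / 2" using N8 by (simp add: field_simps)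
  then have l: "N / 4 \<le> (N - 1/N)/2" by simp
  have u: "(N - 1/N)/2 \<le> N / 2" using N8 by simp
  have A: "Aq r = ((N - 1/N)/2)^2" unfolding N_def by (rule Aq_eq)
  have "(N/4)^2 \<le> ((N - 1/N)/2)^2" by (rule power_mono[OF l]) (use N8 in simp)
  then show "real n ^ 6 / 16 \<le> Aq r" unfolding A N6 by (simp add: power_divide)
  have "((N - 1/N)/2)^2 \<le> (N/2)^2" by (rule power_mono[OF u]) (use l N8 in simp)
  then show "Aq r \<le> real n ^ 6 / 4" unfolding A N6 by (simp add: power_divide)
qed

lemma hd_pt: "hdist (pt n r \<alpha> i) (pt n r \<alpha> j) = arcosh (1 + 2 * Aq r * (sin (pi * (real i - real j) / real n))^2)"
proof -
  have n0: "real n > 0" using n2 by simp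
  have "((\<alpha> + 2 * pi * real i / real n) - (\<alpha> + 2 * pi * real j / real n)) / 2 = pi * (real i - real j) / real n"
    using n0 by (simp add: field_simps)
  then show ?thesis unfolding pt_def hdist_circle[OF r0 r1] Aq_def by simp
qed

lemma Aq_nonneg: "0 \<le> Aq r" unfolding Aq_def by simp

lemma y_ge1: "1 \<le> 1 + 2 * Aq r * s^2"
  using Aq_nonneg by simp

lemma hd_nonneg: "0 \<le> hdist (pt n r \<alpha> i) (pt n r \<alpha> j)"
  unfolding hd_pt using y_ge1 by simp

lemma G_low:
  assumes "i < n" "j < n"
  shows "real n ^ 4 * (real (gap n i j))^2 / 8 \<le> exp (hdist (pt n r \<alpha> i) (pt n r \<alpha> j))"
proof -
  define s where "s = sin (pi * (real i - real j) / real n)"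
  define g where "g = real (gap n i j)"
  have n0: "real n > 0" using n2 by simp
  have s1: "(g / real n)^2 \<le> s^2" unfolding s_def g_def by (rule sin_sq_gap_bounds[OF assms])
  have "2 * (real n ^ 6 / 16) * (g / real n)^2 \<le> 2 * Aq r * s^2"
    using Aq_bounds(1) s1 Aq_nonneg by (intro mult_mono) auto
  moreover have "2 * (real n ^ 6 / 16) * (g / real n)^2 = real n ^ 4 * g^2 / 8"
  proof -
    have "real n ^ 6 = real n ^ 4 * (real n)^2" by (simp flip: power_add)
    then show ?thesis using n0 by (simp add: power_divide field_simps)
  qed
  moreover have "1 + 2 * Aq r * s^2 \<le> exp (hdist (pt n r \<alpha> i) (pt n r \<alpha> j))"
    unfolding hd_pt s_def[symmetric] using exp_arcosh_bounds(1)[OF y_ge1] by simp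
  ultimately show ?thesis unfolding g_def by linarith
qed

lemma G_up:
  assumes "i < n" "j < n"
  shows "exp (hdist (pt n r \<alpha> i) (pt n r \<alpha> j)) \<le> 2 + 16 * (real n ^ 4 * (real (gap n i j))^2)"
proof -
  define s where "s = sin (pi * (real i - real j) / real n)"
  define g where "g = real (gap n i j)"
  have n0: "real n > 0" using n2 by simp
  have s1: "s^2 \<le> 16 * (g / real n)^2" unfolding s_def g_def by (rule sin_sq_gap_bounds[OF assms])
  have i1: "2 * Aq r * s^2 \<le> 2 * (real n ^ 6 / 4) * (16 * (g / real n)^2)"
    using Aq_bounds(2) s1 Aq_nonneg by (intro mult_mono) auto
  have i2: "2 * (real n ^ 6 / 4) * (16 * (g / real n)^2) = 8 * (real n ^ 4 * g^2)"
  proof -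
    have "real n ^ 6 = real n ^ 4 * (real n)^2" by (simp flip: power_add)
    then show ?thesis using n0 by (simp add: power_divide field_simps)
  qed
  have i3: "exp (hdist (pt n r \<alpha> i) (pt n r \<alpha> j)) \<le> 2 * (1 + 2 * Aq r * s^2)"
    unfolding hd_pt s_def[symmetric] using exp_arcosh_bounds(2)[OF y_ge1] by simp
  have "2 * Aq r * s^2 \<le> 8 * (real n ^ 4 * g^2)" using i1 i2 by linarith
  then have "2 * (1 + 2 * Aq r * s^2) \<le> 2 + 16 * (real n ^ 4 * g^2)" by simp
  with i3 show ?thesis unfolding g_def by linarith
qed

lemma exp3_le: "exp (3::real) \<le> 27"
proof -
  have "exp (3::real) = exp 1 ^ 3" using exp_of_nat_mult[of 3 "1::real"] by simp
  also have "\<dots> \<le> 3 ^ 3" using e_less_272 by (intro power_mono) auto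
  finally show ?thesis by simp
qed

lemma hdist_self: "hdist u u = 0" unfolding hdist_def by simp

lemma pt_inj: assumes "i < n" "j < n" "pt n r \<alpha> i = pt n r \<alpha> j" shows "i = j"
proof (rule ccontr)
  assume "i \<noteq> j"
  then have g: "1 \<le> gap n i j" using gap_pos assms by auto
  have "real n ^ 4 * 1 / 8 \<le> real n ^ 4 * (real (gap n i j))^2 / 8"
    using g by (intro divide_right_mono mult_left_mono) auto
  also have "\<dots> \<le> exp (hdist (pt n r \<alpha> i) (pt n r \<alpha> j))" by (rule G_low[OF assms(1,2)])
  also have "\<dots> = 1" using assms(3) by (simp add: hdist_self)
  finally have "real n ^ 4 \<le> 8" by simp
  moreover have "real n ^ 4 \<ge> 2 ^ 4" using n2 by (intro power_mono) auto
  ultimately show False by simp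
qed

lemma edge_low: assumes "u \<in> pt n r \<alpha> ` {..<n}" "v \<in> pt n r \<alpha> ` {..<n}" "u \<noteq> v"
  shows "real n ^ 4 / 8 \<le> exp (hdist u v)"
proof -
  obtain i j where ij: "i < n" "j < n" "u = pt n r \<alpha> i" "v = pt n r \<alpha> j" using assms(1,2) by auto
  then have "i \<noteq> j" using assms(3) by auto
  then have g: "1 \<le> gap n i j" using gap_pos ij by auto
  have "real n ^ 4 * 1 / 8 \<le> real n ^ 4 * (real (gap n i j))^2 / 8"
    using g by (intro divide_right_mono mult_left_mono) auto
  also have "\<dots> \<le> exp (hdist u v)" unfolding ij(3,4) by (rule G_low[OF ij(1,2)])
  finally show ?thesis by simp
qed

lemma P_nonneg: assumes "u \<in> pt n r \<alpha> ` {..<n}" "v \<in> pt n r \<alpha> ` {..<n}"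
  shows "0 \<le> hdist u v"
  using assms hd_nonneg by auto

lemma stretch_up:
  assumes ij: "i < n" "j < n" and g1: "1 \<le> gap n i j" and gn: "(gap n i j)^2 \<le> n"
    and e0: "0 \<le> \<epsilon>" and e1: "\<epsilon> \<le> 1 / (2 * ln (real n))" and n18: "n \<ge> 18"
  shows "exp ((2 + \<epsilon>) * hdist (pt n r \<alpha> i) (pt n r \<alpha> j)) \<le> 27 * (18 * (real n ^ 4 * (real (gap n i j))^2))^2"
proof -
  define d where "d = hdist (pt n r \<alpha> i) (pt n r \<alpha> j)"
  define g where "g = real (gap n i j)"
  define B where "B = 18 * (real n ^ 4 * g^2)"
  have d0: "0 \<le> d" unfolding d_def by (rule hd_nonneg)
  have n0: "real n > 0" using n2 by simp
  have gg: "1 \<le> g^2" using g1 unfolding g_def by simp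
  have "1 \<le> real n ^ 4" using n2 by simp
  then have m1: "1 \<le> real n ^ 4 * g^2" using gg by (metis mult_mono' mult_1 zero_le_one)
  have h1: "exp d \<le> B" using G_up[OF ij] m1 unfolding d_def B_def g_def by linarith
  have "g^2 \<le> real n" using gn unfolding g_def by (metis of_nat_le_iff of_nat_power)
  then have "B \<le> 18 * (real n ^ 4 * real n)" unfolding B_def by (intro mult_left_mono) auto
  also have "\<dots> \<le> real n * (real n ^ 4 * real n)" using n18 by (intro mult_right_mono) auto
  also have "\<dots> = real n ^ 6" by (simp add: power_numeral_reduce)
  finally have h2: "B \<le> real n ^ 6" .
  have "exp d \<le> exp (ln (real n ^ 6))" using h1 h2 n0 by simp
  then have "d \<le> ln (real n ^ 6)" by simp
  also have "\<dots> = 6 * ln (real n)" by (simp add: ln_realpow)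
  finally have h3: "d \<le> 6 * ln (real n)" .
  have ln0: "ln (real n) > 0" using n2 by simp
  have "\<epsilon> * d \<le> (1 / (2 * ln (real n))) * (6 * ln (real n))"
    using e0 e1 d0 h3 by (intro mult_mono) auto
  also have "\<dots> = 3" using ln0 by simp
  finally have h4: "\<epsilon> * d \<le> 3" .
  have h5: "exp ((2 + \<epsilon>) * d) = (exp d)^2 * exp (\<epsilon> * d)"
  proof -
    have "(2 + \<epsilon>) * d = d + d + \<epsilon> * d" by (simp add: algebra_simps)
    then have "exp ((2 + \<epsilon>) * d) = exp (d + d + \<epsilon> * d)" by (simp only:)
    also have "\<dots> = (exp d)^2 * exp (\<epsilon> * d)" by (simp only: exp_add power2_eq_square)
    finally show ?thesis .
  qed
  have "(exp d)^2 \<le> B^2" using h1 by (intro power_mono) auto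
  moreover have "exp (\<epsilon> * d) \<le> 27" using h4 exp3_le by (meson exp_le_cancel_iff order_trans)
  ultimately have "(exp d)^2 * exp (\<epsilon> * d) \<le> B^2 * 27" by (intro mult_mono) auto
  then show ?thesis using h5 unfolding d_def B_def g_def by (simp add: mult.commute)
qed

lemma edge_props:
  assumes sp: "is_spanner t P E" and e: "{a, b} \<in> E"
  shows "a \<in> P" "b \<in> P" "a \<noteq> b"
proof -
  have "\<forall>e\<in>E. \<exists>u v. e = {u, v} \<and> u \<in> P \<and> v \<in> P \<and> u \<noteq> v"
    using sp unfolding is_spanner_def by (rule conjunct1)
  then obtain u v where uv: "{a, b} = {u, v}" "u \<in> P" "v \<in> P" "u \<noteq> v"
    using e by blast
  then show "a \<in> P" "b \<in> P" "a \<noteq> b" by (auto simp: doubleton_eq_iff)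
qed

lemma walk_lemma:
  assumes sp: "is_spanner (2 + \<epsilon>) (pt n r \<alpha> ` {..<n}) E"
    and e0: "0 \<le> \<epsilon>" and e1: "\<epsilon> \<le> 1 / (2 * ln (real n))" and nbig: "n \<ge> 3000"
    and ij: "i < n" "j < n" "i \<noteq> j" and gn: "(gap n i j)^2 \<le> n"
  shows "{pt n r \<alpha> i, pt n r \<alpha> j} \<in> E \<or>
         (\<exists>w<n. {pt n r \<alpha> i, pt n r \<alpha> w} \<in> E \<and> {pt n r \<alpha> w, pt n r \<alpha> j} \<in> E \<and>
                gap n i w * gap n w j \<le> 750 * (gap n i j)^2)"
proof -
  define P where "P = pt n r \<alpha> ` {..<n}"
  have sp': "is_spanner (2 + \<epsilon>) P E" using sp unfolding P_def .
  have iP: "pt n r \<alpha> i \<in> P" "pt n r \<alpha> j \<in> P" using ij unfolding P_def by auto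
  have allp: "\<forall>u\<in>P. \<forall>v\<in>P. \<exists>xs. is_walk E xs \<and> hd xs = u \<and> last xs = v \<and>
                          walk_length xs \<le> (2 + \<epsilon>) * hdist u v"
    using sp' unfolding is_spanner_def by (rule conjunct2)
  obtain xs where W: "is_walk E xs" "hd xs = pt n r \<alpha> i" "last xs = pt n r \<alpha> j"
      "walk_length xs \<le> (2 + \<epsilon>) * hdist (pt n r \<alpha> i) (pt n r \<alpha> j)"
    using bspec[OF bspec[OF allp iP(1)] iP(2)] by blast
  have ne: "xs \<noteq> []" using W(1) unfolding is_walk_def by simp
  have st: "\<And>m. Suc m < length xs \<Longrightarrow> {xs ! m, xs ! Suc m} \<in> E"
    using W(1) unfolding is_walk_def by simp
  have inP: "\<And>m. Suc m < length xs \<Longrightarrow> xs ! m \<in> P \<and> xs ! Suc m \<in> P \<and> xs ! m \<noteq> xs ! Suc m"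
  proof -
    fix m assume "Suc m < length xs"
    then have "{xs ! m, xs ! Suc m} \<in> E" by (rule st)
    then show "xs ! m \<in> P \<and> xs ! Suc m \<in> P \<and> xs ! m \<noteq> xs ! Suc m"
      using edge_props[OF sp'] by blast
  qed
  have x0: "xs ! 0 = pt n r \<alpha> i" using W(2) ne by (simp add: hd_conv_nth)
  have xl: "xs ! (length xs - 1) = pt n r \<alpha> j" using W(3) ne by (simp add: last_conv_nth)
  have neq: "pt n r \<alpha> i \<noteq> pt n r \<alpha> j"
  proof
    assume "pt n r \<alpha> i = pt n r \<alpha> j"
    then have "i = j" by (rule pt_inj[OF ij(1,2)])
    then show False using ij(3) by simp
  qed
  have L2: "length xs \<ge> 2"
  proof (rule ccontr)
    assume "\<not> length xs \<ge> 2"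
    moreover have "length xs \<noteq> 0" using ne by simp
    ultimately have "length xs = 1" by linarith
    then show False using x0 xl neq by simp
  qed
  define g where "g = real (gap n i j)"
  define M where "M = real n ^ 4"
  have M0: "M > 0" unfolding M_def using n2 by simp
  have g1: "1 \<le> gap n i j" using gap_pos ij by auto
  have UB: "exp (walk_length xs) \<le> 27 * (18 * (M * g^2))^2"
  proof -
    have "exp (walk_length xs) \<le> exp ((2 + \<epsilon>) * hdist (pt n r \<alpha> i) (pt n r \<alpha> j))" using W(4) by simp
    also have "\<dots> \<le> 27 * (18 * (real n ^ 4 * (real (gap n i j))^2))^2"
      by (rule stretch_up[OF ij(1,2) g1 gn e0 e1]) (use nbig in simp)
    finally show ?thesis unfolding M_def g_def .
  qed
  have "27 * (18 * (M * g^2))^2 = 8748 * M^2 * (g^2)^2" by (simp add: power_mult_distrib)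
  then have UB': "exp (walk_length xs) \<le> 8748 * M^2 * (g^2)^2" using UB by simp
  have "length xs = 2 \<or> length xs = 3 \<or> length xs \<ge> 4" using L2 by linarith
  moreover
  { assume L: "length xs = 2"
    have "{xs ! 0, xs ! 1} \<in> E" using st[of 0] L by simp
    then have "{pt n r \<alpha> i, pt n r \<alpha> j} \<in> E" using x0 xl L by simp }
  moreover
  { assume L: "length xs = 3"
    have e01: "{xs ! 0, xs ! 1} \<in> E" using st[of 0] L by simp
    have e12: "{xs ! 1, xs ! 2} \<in> E" using st[of 1] L by (simp add: numeral_2_eq_2)
    have "xs ! 1 \<in> P" using inP[of 0] L by simp
    then obtain w where w: "w < n" "xs ! 1 = pt n r \<alpha> w" unfolding P_def by auto
    have x2: "xs ! 2 = pt n r \<alpha> j" using xl L by simp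
    define a where "a = real (gap n i w)"
    define b where "b = real (gap n w j)"
    have wl: "walk_length xs = hdist (xs ! 0) (xs ! 1) + hdist (xs ! 1) (xs ! 2)"
      unfolding walk_length_def L by (simp add: numeral_2_eq_2)
    have "exp (walk_length xs) = exp (hdist (pt n r \<alpha> i) (pt n r \<alpha> w)) * exp (hdist (pt n r \<alpha> w) (pt n r \<alpha> j))"
      unfolding wl x0 x2 w(2) by (simp add: exp_add)
    moreover have "M * a^2 / 8 \<le> exp (hdist (pt n r \<alpha> i) (pt n r \<alpha> w))"
      unfolding M_def a_def by (rule G_low[OF ij(1) w(1)])
    moreover have "M * b^2 / 8 \<le> exp (hdist (pt n r \<alpha> w) (pt n r \<alpha> j))"
      unfolding M_def b_def by (rule G_low[OF w(1) ij(2)])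
    ultimately have "(M * a^2 / 8) * (M * b^2 / 8) \<le> exp (walk_length xs)"
      using M0 by (metis mult_mono exp_ge_zero zero_le_power2 divide_nonneg_pos mult_nonneg_nonneg less_imp_le zero_less_numeral)
    with UB' have "(M * a^2 / 8) * (M * b^2 / 8) \<le> 8748 * M^2 * (g^2)^2" by linarith
    moreover have "(M * a^2 / 8) * (M * b^2 / 8) = M^2 * (a * b)^2 / 64"
      by (simp add: power2_eq_square)
    moreover have "8748 * M^2 * (g^2)^2 = M^2 * (559872 * (g^2)^2) / 64" by simp
    ultimately have "M^2 * (a * b)^2 \<le> M^2 * (559872 * (g^2)^2)" by simp
    then have "(a * b)^2 \<le> 559872 * (g^2)^2" using M0 by simp
    also have "\<dots> \<le> (750 * g^2)^2" by (simp add: power_mult_distrib)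
    finally have "a * b \<le> 750 * g^2" by (rule power2_le_imp_le) simp
    then have "real (gap n i w * gap n w j) \<le> real (750 * (gap n i j)^2)"
      unfolding a_def b_def g_def by simp
    then have "gap n i w * gap n w j \<le> 750 * (gap n i j)^2" by (simp only: of_nat_le_iff)
    then have "\<exists>w<n. {pt n r \<alpha> i, pt n r \<alpha> w} \<in> E \<and> {pt n r \<alpha> w, pt n r \<alpha> j} \<in> E \<and>
                gap n i w * gap n w j \<le> 750 * (gap n i j)^2"
      using w e01 e12 x0 x2 by auto }
  moreover
  { assume L: "length xs \<ge> 4"
    define f where "f = (\<lambda>m. hdist (xs ! m) (xs ! Suc m))"
    have fnn: "\<And>m. m \<in> {..<length xs - 1} \<Longrightarrow> 0 \<le> f m"
    proof -
      fix m assume "m \<in> {..<length xs - 1}"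
      then have "Suc m < length xs" by auto
      then show "0 \<le> f m" unfolding f_def using inP P_nonneg unfolding P_def by blast
    qed
    have fl: "\<And>m. m < 3 \<Longrightarrow> M / 8 \<le> exp (f m)"
    proof -
      fix m assume "m < (3::nat)"
      then have "Suc m < length xs" using L by linarith
      then show "M / 8 \<le> exp (f m)" unfolding f_def M_def using inP edge_low unfolding P_def by blast
    qed
    have "sum f {..<3} \<le> sum f {..<length xs - 1}"
      by (rule sum_mono2) (use L fnn in auto)
    then have s1: "exp (sum f {..<3}) \<le> exp (walk_length xs)" unfolding walk_length_def f_def by simp
    have "exp (sum f {..<3}) = exp (f 0) * exp (f 1) * exp (f 2)"
      by (simp add: numeral_3_eq_3 numeral_2_eq_2 exp_add)
    moreover have "(M/8) * (M/8) * (M/8) \<le> exp (f 0) * exp (f 1) * exp (f 2)"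
      using fl[of 0] fl[of 1] fl[of 2] M0 by (intro mult_mono) auto
    ultimately have "(M/8) * (M/8) * (M/8) \<le> 8748 * M^2 * (g^2)^2" using s1 UB' by linarith
    moreover have "(g^2)^2 \<le> (real n)^2"
    proof -
      have "g^2 \<le> real n" using gn unfolding g_def by (metis of_nat_le_iff of_nat_power)
      then show ?thesis by (intro power_mono) auto
    qed
    then have "8748 * M^2 * (g^2)^2 \<le> 8748 * M^2 * (real n)^2" by (intro mult_left_mono) auto
    ultimately have c1: "(M/8) * (M/8) * (M/8) \<le> 8748 * M^2 * (real n)^2" by linarith
    have nn: "(real n)^2 \<ge> 3000^2" using nbig by (intro power_mono) auto
    have "M = (real n)^2 * (real n)^2" unfolding M_def by (simp flip: power_add)
    also have "\<dots> \<ge> 3000^2 * (real n)^2" using nn by (intro mult_right_mono) auto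
    finally have "M \<ge> 9000000 * (real n)^2" by simp
    moreover have "(real n)^2 > 0" using n2 by simp
    ultimately have "8748 * (real n)^2 < M / 512" by linarith
    moreover have "M^2 > 0" using M0 by simp
    ultimately have "M^2 * (8748 * (real n)^2) < M^2 * (M / 512)" by (rule mult_strict_left_mono)
    moreover have "(M/8) * (M/8) * (M/8) = M^2 * (M / 512)" by (simp add: power2_eq_square)
    moreover have "8748 * M^2 * (real n)^2 = M^2 * (8748 * (real n)^2)" by simp
    ultimately have False using c1 by linarith }
  ultimately show ?thesis by blast
qed

lemma pos_lemma:
  fixes X W S H N :: int
  assumes "S + 127 * H \<le> X" "X < S + 128 * H" "0 \<le> W" "W < N" "S + 256 * H \<le> N"
    "min \<bar>X - W\<bar> (N - \<bar>X - W\<bar>) < 60 * H" "0 \<le> S"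
  shows "S \<le> W \<and> W < S + 256 * H"
  using assms unfolding min_def abs_if by (simp split: if_splits)

lemma block_lemma:
  assumes sp: "is_spanner (2 + \<epsilon>) (pt n r \<alpha> ` {..<n}) E"
    and e0: "0 \<le> \<epsilon>" and e1: "\<epsilon> \<le> 1 / (2 * ln (real n))" and nbig: "n \<ge> 3000"
    and h1: "1 \<le> h" and sn: "s + 256 * h \<le> n" and hn: "(2 * h)^2 \<le> n"
  shows "(\<forall>x\<in>{s + 127 * h..<s + 128 * h}. \<exists>z. s + 128 * h \<le> z \<and> z < s + 256 * h \<and> {pt n r \<alpha> x, pt n r \<alpha> z} \<in> E)
       \<or> (\<forall>y\<in>{s + 128 * h..<s + 129 * h}. \<exists>z. s \<le> z \<and> z < s + 128 * h \<and> {pt n r \<alpha> y, pt n r \<alpha> z} \<in> E)"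
proof (rule ccontr)
  assume "\<not> ?thesis"
  then obtain x y where x: "s + 127 * h \<le> x" "x < s + 128 * h"
      and nx: "\<not> (\<exists>z. s + 128 * h \<le> z \<and> z < s + 256 * h \<and> {pt n r \<alpha> x, pt n r \<alpha> z} \<in> E)"
      and y: "s + 128 * h \<le> y" "y < s + 129 * h"
      and ny: "\<not> (\<exists>z. s \<le> z \<and> z < s + 128 * h \<and> {pt n r \<alpha> y, pt n r \<alpha> z} \<in> E)"
    by auto
  define k where "k = y - x"
  have k1: "1 \<le> k" "k < 2 * h" using x y unfolding k_def by auto
  have xn: "x < n" and yn: "y < n" and xy: "x \<noteq> y" using x y sn by auto
  have "4 * h \<le> (2 * h)^2" using h1 by (simp add: power2_eq_square)
  then have h4: "4 * h \<le> n" using hn by linarith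
  have gk: "gap n x y = k"
  proof -
    have "int (gap n x y) = min \<bar>int x - int y\<bar> (int n - \<bar>int x - int y\<bar>)" by (rule gap_int[OF xn yn])
    also have "\<bar>int x - int y\<bar> = int k" unfolding k_def using x y by auto
    also have "min (int k) (int n - int k) = int k" using k1 h4 by simp
    finally show ?thesis by simp
  qed
  have "k^2 \<le> (2 * h)^2" using k1 by (intro power_mono) auto
  then have gsq: "(gap n x y)^2 \<le> n" using hn gk by simp
  from walk_lemma[OF sp e0 e1 nbig xn yn xy gsq]
  show False
  proof
    assume "{pt n r \<alpha> x, pt n r \<alpha> y} \<in> E"
    then show False using nx y by auto
  next
    assume "\<exists>w<n. {pt n r \<alpha> x, pt n r \<alpha> w} \<in> E \<and> {pt n r \<alpha> w, pt n r \<alpha> y} \<in> E \<and>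
                gap n x w * gap n w y \<le> 750 * (gap n x y)^2"
    then obtain w where w: "w < n" "{pt n r \<alpha> x, pt n r \<alpha> w} \<in> E" "{pt n r \<alpha> w, pt n r \<alpha> y} \<in> E"
      and ab: "gap n x w * gap n w y \<le> 750 * k^2" using gk by auto
    define a where "a = gap n x w"
    define b where "b = gap n w y"
    have tri: "a \<le> k + b" unfolding a_def b_def
      using gap_triangle[OF xn yn w(1)] gap_sym[of n y w] gk by simp
    have a30: "a \<le> 30 * k"
    proof (rule ccontr)
      assume "\<not> a \<le> 30 * k"
      then have a1: "30 * k + 1 \<le> a" by simp
      then have b1: "29 * k + 1 \<le> b" using tri by simp
      have "(30 * k + 1) * (29 * k + 1) \<le> a * b" using a1 b1 by (rule mult_le_mono)
      moreover have "750 * k^2 < (30 * k + 1) * (29 * k + 1)" by (simp add: power2_eq_square algebra_simps)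
      ultimately show False using ab unfolding a_def b_def by simp
    qed
    then have a60: "int a < 60 * int h" using k1 by simp
    have "int a = min \<bar>int x - int w\<bar> (int n - \<bar>int x - int w\<bar>)" unfolding a_def by (rule gap_int[OF xn w(1)])
    then have "min \<bar>int x - int w\<bar> (int n - \<bar>int x - int w\<bar>) < 60 * int h" using a60 by simp
    then have "int s \<le> int w \<and> int w < int s + 256 * int h"
      by (intro pos_lemma[where N = "int n"]) (use x w(1) sn in auto)
    then have wI: "s \<le> w" "w < s + 256 * h" by auto
    show False
    proof (cases "w < s + 128 * h")
      case True
      have "{pt n r \<alpha> y, pt n r \<alpha> w} \<in> E" using w(3) by (simp add: insert_commute)
      then show False using ny wI True by auto
    next
      case False
      then show False using nx wI w(2) by auto
    qed
  qed
qed

lemma div_lo: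
  fixes x t q :: nat
  assumes "t * (2 * q) \<le> x" "x < t * (2 * q) + q"
  shows "x div (2 * q) = t \<and> x div q = 2 * t"
proof
  show "x div (2 * q) = t" by (rule div_nat_eqI) (use assms in \<open>auto simp: algebra_simps\<close>)
  show "x div q = 2 * t" by (rule div_nat_eqI) (use assms in \<open>auto simp: algebra_simps\<close>)
qed

lemma div_hi:
  fixes x t q :: nat
  assumes "t * (2 * q) + q \<le> x" "x < t * (2 * q) + 2 * q"
  shows "x div (2 * q) = t \<and> x div q = 2 * t + 1"
proof
  show "x div (2 * q) = t" by (rule div_nat_eqI) (use assms in \<open>auto simp: algebra_simps\<close>)
  show "x div q = 2 * t + 1" by (rule div_nat_eqI) (use assms in \<open>auto simp: algebra_simps\<close>)
qed

definition Cset :: "complex set set \<Rightarrow> nat \<Rightarrow> nat \<Rightarrow> complex set set" where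
  "Cset E j t = {e \<in> E. \<exists>x z. x < n \<and> z < n \<and> e = {pt n r \<alpha> x, pt n r \<alpha> z} \<and>
      x div 2^(j+1) = t \<and> z div 2^(j+1) = t \<and> x div 2^j \<noteq> z div 2^j}"

lemma card_half:
  assumes finE: "finite E" and A: "A \<subseteq> {..<n}"
    and f: "\<forall>a\<in>A. f a < n \<and> {pt n r \<alpha> a, pt n r \<alpha> (f a)} \<in> E \<and> a div 2^(j+1) = t \<and> f a div 2^(j+1) = t
               \<and> a div 2^j \<noteq> f a div 2^j"
    and sep: "\<forall>a\<in>A. \<forall>a'\<in>A. a \<noteq> f a'"
  shows "card A \<le> card (Cset E j t)"
proof (rule card_inj_on_le[where f = "\<lambda>a. {pt n r \<alpha> a, pt n r \<alpha> (f a)}"])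
  show "inj_on (\<lambda>a. {pt n r \<alpha> a, pt n r \<alpha> (f a)}) A"
  proof (rule inj_onI)
    fix a a' assume aA: "a \<in> A" "a' \<in> A" and eq: "{pt n r \<alpha> a, pt n r \<alpha> (f a)} = {pt n r \<alpha> a', pt n r \<alpha> (f a')}"
    have an: "a < n" "a' < n" "f a' < n" using aA A f by auto
    have "pt n r \<alpha> a \<in> {pt n r \<alpha> a', pt n r \<alpha> (f a')}" using eq by blast
    then have "pt n r \<alpha> a = pt n r \<alpha> a' \<or> pt n r \<alpha> a = pt n r \<alpha> (f a')" by blast
    then show "a = a'"
    proof
      assume "pt n r \<alpha> a = pt n r \<alpha> a'" then show "a = a'" by (rule pt_inj[OF an(1,2)])
    next
      assume "pt n r \<alpha> a = pt n r \<alpha> (f a')"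
      then have "a = f a'" by (rule pt_inj[OF an(1,3)])
      then show "a = a'" using sep aA by blast
    qed
  qed
  show "(\<lambda>a. {pt n r \<alpha> a, pt n r \<alpha> (f a)}) ` A \<subseteq> Cset E j t"
  proof
    fix e assume "e \<in> (\<lambda>a. {pt n r \<alpha> a, pt n r \<alpha> (f a)}) ` A"
    then obtain a where aA: "a \<in> A" and e: "e = {pt n r \<alpha> a, pt n r \<alpha> (f a)}" by blast
    have "a < n" using aA A by auto
    then show "e \<in> Cset E j t" unfolding Cset_def using f aA e by blast
  qed
  show "finite (Cset E j t)" using finE unfolding Cset_def by simp
qed

lemma pow_split: "7 \<le> j \<Longrightarrow> (2::nat)^j = 128 * 2^(j-7)"
proof -
  assume "7 \<le> j"
  then have "(2::nat)^j = 2^(j-7+7)" by simp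
  also have "\<dots> = 2^(j-7) * 2^7" by (rule power_add)
  finally show ?thesis by simp
qed

lemma C_card:
  assumes sp: "is_spanner (2 + \<epsilon>) (pt n r \<alpha> ` {..<n}) E"
    and e0: "0 \<le> \<epsilon>" and e1: "\<epsilon> \<le> 1 / (2 * ln (real n))" and nbig: "n \<ge> 3000"
    and j7: "7 \<le> j" and j4: "4^j \<le> n" and tn: "t < n div 2^(j+1)" and finE: "finite E"
  shows "2^(j-7) \<le> card (Cset E j t)"
proof -
  define h :: nat where "h = 2^(j-7)"
  define q :: nat where "q = 2^j"
  define s where "s = t * (2 * q)"
  have h1: "1 \<le> h" unfolding h_def by simp
  have qh: "q = 128 * h" unfolding q_def h_def using pow_split[OF j7] .
  have q2: "(2::nat)^(j+1) = 2 * q" unfolding q_def by simp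
  have "Suc t \<le> n div (2 * q)" using tn q2 by simp
  then have "Suc t * (2 * q) \<le> n div (2 * q) * (2 * q)" by (rule mult_right_mono) simp
  also have "\<dots> \<le> n" by (rule div_times_less_eq_dividend)
  finally have sn: "s + 256 * h \<le> n" unfolding s_def qh by (simp add: algebra_simps)
  have "(2::nat)^j * 2^j = 4^j" by (simp flip: power_mult_distrib)
  then have "q * q \<le> n" using j4 unfolding q_def by simp
  moreover have "(2 * h)^2 \<le> q * q" unfolding qh by (simp add: power2_eq_square)
  ultimately have hn: "(2 * h)^2 \<le> n" by linarith
  have divz: "\<And>x. s + 128 * h \<le> x \<Longrightarrow> x < s + 256 * h \<Longrightarrow> x div 2^(j+1) = t \<and> x div 2^j = 2 * t + 1"
  proof -
    fix x assume "s + 128 * h \<le> x" "x < s + 256 * h"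
    then have "t * (2 * q) + q \<le> x" "x < t * (2 * q) + 2 * q" unfolding s_def qh by auto
    then show "x div 2^(j+1) = t \<and> x div 2^j = 2 * t + 1" using div_hi unfolding q2 q_def by blast
  qed
  have divx': "\<And>x. s \<le> x \<Longrightarrow> x < s + 128 * h \<Longrightarrow> x div 2^(j+1) = t \<and> x div 2^j = 2 * t"
  proof -
    fix x assume "s \<le> x" "x < s + 128 * h"
    then have "t * (2 * q) \<le> x" "x < t * (2 * q) + q" unfolding s_def qh by auto
    then show "x div 2^(j+1) = t \<and> x div 2^j = 2 * t" using div_lo unfolding q2 q_def by blast
  qed
  from block_lemma[OF sp e0 e1 nbig h1 sn hn]
  show ?thesis
  proof
    assume c: "\<forall>x\<in>{s + 127 * h..<s + 128 * h}. \<exists>z. s + 128 * h \<le> z \<and> z < s + 256 * h \<and> {pt n r \<alpha> x, pt n r \<alpha> z} \<in> E"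
    then obtain f where f: "\<forall>x\<in>{s + 127 * h..<s + 128 * h}. s + 128 * h \<le> f x \<and> f x < s + 256 * h \<and> {pt n r \<alpha> x, pt n r \<alpha> (f x)} \<in> E"
      by metis
    have "card {s + 127 * h..<s + 128 * h} \<le> card (Cset E j t)"
    proof (rule card_half[OF finE])
      show "{s + 127 * h..<s + 128 * h} \<subseteq> {..<n}" using sn by auto
      show "\<forall>a\<in>{s + 127 * h..<s + 128 * h}. f a < n \<and> {pt n r \<alpha> a, pt n r \<alpha> (f a)} \<in> E \<and> a div 2^(j+1) = t \<and> f a div 2^(j+1) = t
               \<and> a div 2^j \<noteq> f a div 2^j"
      proof
        fix a assume a: "a \<in> {s + 127 * h..<s + 128 * h}"
        then have fa: "s + 128 * h \<le> f a" "f a < s + 256 * h" "{pt n r \<alpha> a, pt n r \<alpha> (f a)} \<in> E" using f by auto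
        have "a div 2^(j+1) = t \<and> a div 2^j = 2 * t" using a by (intro divx') auto
        moreover have "f a div 2^(j+1) = t \<and> f a div 2^j = 2 * t + 1" using fa by (intro divz) auto
        ultimately show "f a < n \<and> {pt n r \<alpha> a, pt n r \<alpha> (f a)} \<in> E \<and> a div 2^(j+1) = t \<and> f a div 2^(j+1) = t
               \<and> a div 2^j \<noteq> f a div 2^j" using fa sn by auto
      qed
      show "\<forall>a\<in>{s + 127 * h..<s + 128 * h}. \<forall>a'\<in>{s + 127 * h..<s + 128 * h}. a \<noteq> f a'"
        using f by fastforce
    qed
    then show ?thesis unfolding h_def by simp
  next
    assume c: "\<forall>y\<in>{s + 128 * h..<s + 129 * h}. \<exists>z. s \<le> z \<and> z < s + 128 * h \<and> {pt n r \<alpha> y, pt n r \<alpha> z} \<in> E"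
    then obtain f where f: "\<forall>y\<in>{s + 128 * h..<s + 129 * h}. s \<le> f y \<and> f y < s + 128 * h \<and> {pt n r \<alpha> y, pt n r \<alpha> (f y)} \<in> E"
      by metis
    have "card {s + 128 * h..<s + 129 * h} \<le> card (Cset E j t)"
    proof (rule card_half[OF finE])
      show "{s + 128 * h..<s + 129 * h} \<subseteq> {..<n}" using sn h1 by auto
      show "\<forall>a\<in>{s + 128 * h..<s + 129 * h}. f a < n \<and> {pt n r \<alpha> a, pt n r \<alpha> (f a)} \<in> E \<and> a div 2^(j+1) = t \<and> f a div 2^(j+1) = t
               \<and> a div 2^j \<noteq> f a div 2^j"
      proof
        fix a assume a: "a \<in> {s + 128 * h..<s + 129 * h}"
        then have fa: "s \<le> f a" "f a < s + 128 * h" "{pt n r \<alpha> a, pt n r \<alpha> (f a)} \<in> E" using f by auto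
        have "a div 2^(j+1) = t \<and> a div 2^j = 2 * t + 1" using a h1 by (intro divz) auto
        moreover have "f a div 2^(j+1) = t \<and> f a div 2^j = 2 * t" using fa by (intro divx') auto
        ultimately show "f a < n \<and> {pt n r \<alpha> a, pt n r \<alpha> (f a)} \<in> E \<and> a div 2^(j+1) = t \<and> f a div 2^(j+1) = t
               \<and> a div 2^j \<noteq> f a div 2^j" using fa sn by auto
      qed
      show "\<forall>a\<in>{s + 128 * h..<s + 129 * h}. \<forall>a'\<in>{s + 128 * h..<s + 129 * h}. a \<noteq> f a'"
        using f by fastforce
    qed
    then show ?thesis unfolding h_def by simp
  qed
qed

lemma div_pow_mono:
  fixes a b :: nat
  assumes "a div 2^k = b div 2^k" "k \<le> m"
  shows "a div 2^m = b div 2^m"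
proof -
  have "(2::nat)^m = 2^k * 2^(m-k)" using assms(2) by (simp flip: power_add)
  then show ?thesis using assms(1) by (simp add: div_mult2_eq)
qed

lemma C_disj:
  assumes "e \<in> Cset E j t" "e \<in> Cset E j' t'"
  shows "j = j' \<and> t = t'"
proof -
  obtain x z where A: "x < n" "z < n" "e = {pt n r \<alpha> x, pt n r \<alpha> z}" "x div 2^(j+1) = t" "z div 2^(j+1) = t"
      "x div 2^j \<noteq> z div 2^j" using assms(1) unfolding Cset_def by blast
  obtain x' z' where B: "x' < n" "z' < n" "e = {pt n r \<alpha> x', pt n r \<alpha> z'}" "x' div 2^(j'+1) = t'" "z' div 2^(j'+1) = t'"
      "x' div 2^j' \<noteq> z' div 2^j'" using assms(2) unfolding Cset_def by blast
  have "(pt n r \<alpha> x = pt n r \<alpha> x' \<and> pt n r \<alpha> z = pt n r \<alpha> z') \<or> (pt n r \<alpha> x = pt n r \<alpha> z' \<and> pt n r \<alpha> z = pt n r \<alpha> x')"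
  proof -
    have "{pt n r \<alpha> x, pt n r \<alpha> z} = {pt n r \<alpha> x', pt n r \<alpha> z'}" using A(3) B(3) by simp
    then show ?thesis by (simp only: doubleton_eq_iff)
  qed
  moreover have "pt n r \<alpha> x = pt n r \<alpha> x' \<Longrightarrow> x = x'" by (rule pt_inj[OF A(1) B(1)])
  moreover have "pt n r \<alpha> z = pt n r \<alpha> z' \<Longrightarrow> z = z'" by (rule pt_inj[OF A(2) B(2)])
  moreover have "pt n r \<alpha> x = pt n r \<alpha> z' \<Longrightarrow> x = z'" by (rule pt_inj[OF A(1) B(2)])
  moreover have "pt n r \<alpha> z = pt n r \<alpha> x' \<Longrightarrow> z = x'" by (rule pt_inj[OF A(2) B(1)])
  ultimately have "(x = x' \<and> z = z') \<or> (x = z' \<and> z = x')" by blast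
  then have C: "x div 2^(j'+1) = z div 2^(j'+1)" "x div 2^j' \<noteq> z div 2^j'" "x div 2^(j'+1) = t' \<or> z div 2^(j'+1) = t'"
    using B(4,5,6) by auto
  have jj: "j = j'"
  proof (rule ccontr)
    assume "j \<noteq> j'"
    then have "j < j' \<or> j' < j" by linarith
    then show False
    proof
      assume "j < j'"
      then have "x div 2^j' = z div 2^j'" using div_pow_mono[of x "j+1" z j'] A(4,5) by simp
      then show False using C(2) by simp
    next
      assume "j' < j"
      then have "x div 2^j = z div 2^j" using div_pow_mono[of x "j'+1" z j] C(1) by simp
      then show False using A(6) by simp
    qed
  qed
  then show ?thesis using A(4,5) C(1,3) by auto
qed

lemma count_lemma:
  assumes sp: "is_spanner (2 + \<epsilon>) (pt n r \<alpha> ` {..<n}) E"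
    and e0: "0 \<le> \<epsilon>" and e1: "\<epsilon> \<le> 1 / (2 * ln (real n))" and nbig: "n \<ge> 3000"
    and finE: "finite E" and J4: "4^J \<le> n" and J7: "7 \<le> J"
  shows "(J - 6) * n \<le> 512 * card E"
proof -
  define I where "I = Sigma {7..J} (\<lambda>j. {..< n div 2^(j+1)})"
  define U where "U = (\<lambda>p. Cset E (fst p) (snd p))"
  have finI: "finite I" unfolding I_def by simp
  have "card (\<Union> (U ` I)) = (\<Sum>p\<in>I. card (U p))"
  proof (rule card_UN_disjoint[OF finI])
    show "\<forall>p\<in>I. finite (U p)" using finE unfolding U_def Cset_def by simp
    show "\<forall>p\<in>I. \<forall>p'\<in>I. p \<noteq> p' \<longrightarrow> U p \<inter> U p' = {}"
    proof (intro ballI impI)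
      fix p p' assume "p \<in> I" "p' \<in> I" "p \<noteq> p'"
      show "U p \<inter> U p' = {}"
      proof (rule ccontr)
        assume "U p \<inter> U p' \<noteq> {}"
        then obtain e where "e \<in> Cset E (fst p) (snd p)" "e \<in> Cset E (fst p') (snd p')" unfolding U_def by blast
        then have "fst p = fst p' \<and> snd p = snd p'" by (rule C_disj)
        then show False using \<open>p \<noteq> p'\<close> by (simp add: prod_eq_iff)
      qed
    qed
  qed
  moreover have "\<Union> (U ` I) \<subseteq> E" unfolding U_def Cset_def by blast
  then have "card (\<Union> (U ` I)) \<le> card E" by (rule card_mono[OF finE])
  ultimately have cE: "(\<Sum>p\<in>I. card (U p)) \<le> card E" by simp
  have "(\<Sum>p\<in>I. (2::nat)^(fst p - 7)) \<le> (\<Sum>p\<in>I. card (U p))"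
  proof (rule sum_mono)
    fix p assume "p \<in> I"
    then have p: "7 \<le> fst p" "fst p \<le> J" "snd p < n div 2^(fst p + 1)" unfolding I_def by auto
    have "(4::nat)^(fst p) \<le> 4^J" using p(2) by (rule power_increasing) simp
    then have "4^(fst p) \<le> n" using J4 by linarith
    then show "2^(fst p - 7) \<le> card (U p)" unfolding U_def
      by (rule C_card[OF sp e0 e1 nbig p(1) _ p(3) finE])
  qed
  moreover have "(\<Sum>p\<in>I. (2::nat)^(fst p - 7)) = (\<Sum>j\<in>{7..J}. (n div 2^(j+1)) * 2^(j-7))"
  proof -
    have "(\<Sum>p\<in>I. (2::nat)^(fst p - 7)) = (\<Sum>j\<in>{7..J}. \<Sum>t\<in>{..< n div 2^(j+1)}. (2::nat)^(j - 7))"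
      unfolding I_def by (subst sum.Sigma) (auto simp: case_prod_beta)
    then show ?thesis by simp
  qed
  moreover have "(\<Sum>j\<in>{7..J}. n) \<le> (\<Sum>j\<in>{7..J}. 512 * ((n div 2^(j+1)) * 2^(j-7)))"
  proof (rule sum_mono)
    fix j assume "j \<in> {7..J}"
    then have j: "7 \<le> j" "j \<le> J" by auto
    define q2 :: nat where "q2 = 2^(j+1)"
    have q2h: "q2 = 256 * 2^(j-7)" unfolding q2_def using pow_split[OF j(1)] by simp
    have "(2::nat)^(j+2) \<le> 2^(2*j)" using j(1) by (intro power_increasing) auto
    also have "(2::nat)^(2*j) = 4^j" by (simp add: power_mult)
    also have "(4::nat)^j \<le> 4^J" using j(2) by (rule power_increasing) simp
    finally have "2 * q2 \<le> n" using J4 unfolding q2_def by simp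
    moreover have "n = (n div q2) * q2 + n mod q2" by simp
    moreover have "n mod q2 < q2" unfolding q2_def by simp
    ultimately have "n \<le> 2 * ((n div q2) * q2)" by linarith
    also have "\<dots> = 512 * ((n div 2^(j+1)) * 2^(j-7))" unfolding q2h q2_def[symmetric] by simp
    finally show "n \<le> 512 * ((n div 2^(j+1)) * 2^(j-7))" .
  qed
  moreover have "(\<Sum>j\<in>{7..J}. n) = (J - 6) * n" using J7 by simp
  moreover have "(\<Sum>j\<in>{7..J}. 512 * ((n div 2^(j+1)) * 2^(j-7))) = 512 * (\<Sum>j\<in>{7..J}. (n div 2^(j+1)) * 2^(j-7))"
    by (simp add: sum_distrib_left)
  ultimately show ?thesis using cE by linarith
qed

lemma E_nonempty:
  assumes sp: "is_spanner t (pt n r \<alpha> ` {..<n}) E"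
  shows "E \<noteq> {}"
proof -
  define P where "P = pt n r \<alpha> ` {..<n}"
  have iP: "pt n r \<alpha> 0 \<in> P" "pt n r \<alpha> 1 \<in> P" using n2 unfolding P_def by auto
  have allp: "\<forall>u\<in>P. \<forall>v\<in>P. \<exists>xs. is_walk E xs \<and> hd xs = u \<and> last xs = v \<and>
                          walk_length xs \<le> t * hdist u v"
    using sp unfolding is_spanner_def P_def by (rule conjunct2)
  obtain xs where W: "is_walk E xs" "hd xs = pt n r \<alpha> 0" "last xs = pt n r \<alpha> 1"
    using bspec[OF bspec[OF allp iP(1)] iP(2)] by blast
  have ne: "xs \<noteq> []" using W(1) unfolding is_walk_def by simp
  have neq: "pt n r \<alpha> 0 \<noteq> pt n r \<alpha> 1"
  proof
    assume "pt n r \<alpha> 0 = pt n r \<alpha> 1"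
    then have "(0::nat) = 1" using pt_inj[of 0 1] n2 by simp
    then show False by simp
  qed
  have "length xs \<noteq> 1"
  proof
    assume "length xs = 1"
    then have "hd xs = last xs" using ne by (simp add: hd_conv_nth last_conv_nth)
    then show False using W neq by simp
  qed
  then have "Suc 0 < length xs" using ne by (cases xs) auto
  then have "{xs ! 0, xs ! Suc 0} \<in> E" using W(1) unfolding is_walk_def by blast
  then show ?thesis by blast
qed

end

lemma finite_E:
  assumes sp: "is_spanner t P E" and fP: "finite P"
  shows "finite E"
proof -
  have ae: "\<forall>e\<in>E. \<exists>u v. e = {u, v} \<and> u \<in> P \<and> v \<in> P \<and> u \<noteq> v"
    using sp unfolding is_spanner_def by (rule conjunct1)
  have "E \<subseteq> Pow P"
  proof
    fix e assume "e \<in> E"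
    then obtain u v where "e = {u, v}" "u \<in> P" "v \<in> P" using ae by blast
    then show "e \<in> Pow P" by simp
  qed
  then show ?thesis using fP by (rule finite_subset[OF _ finite_Pow_iff[THEN iffD2]])
qed

theorem mainTheorem6:
  shows "\<exists>c>0. \<forall>(n::nat) (\<epsilon>::real) (r::real) (\<alpha>::real) (E::complex set set).
           n \<ge> 2 \<longrightarrow> 0 \<le> \<epsilon> \<longrightarrow> \<epsilon> \<le> 1 / (2 * ln (real n)) \<longrightarrow>
           0 \<le> r \<longrightarrow> r < 1 \<longrightarrow> hdist 0 (complex_of_real r) = 3 * ln (real n) \<longrightarrow>
           is_spanner (2 + \<epsilon>)
             ((\<lambda>k. complex_of_real r * cis (\<alpha> + 2 * pi * real k / real n)) ` {..<n}) E \<longrightarrow>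
           c * real n * ln (real n) \<le> real (card E)"
proof (intro exI[of _ "1 / 10^16"] conjI allI impI)
  show "(0::real) < 1 / 10^16" by simp
  fix n :: nat and \<epsilon> r \<alpha> :: real and E :: "complex set set"
  assume n2: "n \<ge> 2" and e0: "0 \<le> \<epsilon>" and e1: "\<epsilon> \<le> 1 / (2 * ln (real n))"
    and r0: "0 \<le> r" and r1: "r < 1" and hR: "hdist 0 (complex_of_real r) = 3 * ln (real n)"
    and sp0: "is_spanner (2 + \<epsilon>) ((\<lambda>k. complex_of_real r * cis (\<alpha> + 2 * pi * real k / real n)) ` {..<n}) E"
  have peq: "(\<lambda>k. complex_of_real r * cis (\<alpha> + 2 * pi * real k / real n)) = pt n r \<alpha>"
    by (rule ext) (simp add: pt_def)
  have sp: "is_spanner (2 + \<epsilon>) (pt n r \<alpha> ` {..<n}) E" using sp0 unfolding peq .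
  have finE: "finite E" using finite_E[OF sp] by simp
  have ne: "E \<noteq> {}" by (rule E_nonempty[OF n2 r0 r1 hR sp])
  have c1: "1 \<le> real (card E)" using finE ne by (simp add: Suc_le_eq card_gt_0_iff)
  have lnn: "ln (real n) \<le> real n" using n2 by (intro ln_bound) simp
  have ln0: "0 \<le> ln (real n)" using n2 by simp
  show "1 / 10^16 * real n * ln (real n) \<le> real (card E)"
  proof (cases "n < 4^13")
    case True
    then have nl: "real n \<le> 4^13" by simp
    have "real n * ln (real n) \<le> real n * real n" using lnn by (intro mult_left_mono) auto
    also have "\<dots> \<le> 4^13 * 4^13" using nl by (intro mult_mono) auto
    finally have "real n * ln (real n) \<le> 4^13 * 4^13" .
    then have "1 / 10^16 * real n * ln (real n) \<le> 1 / 10^16 * (4^13 * 4^13)" by simp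
    also have "\<dots> \<le> 1" by simp
    finally show ?thesis using c1 by linarith
  next
    case False
    then have nb: "4^13 \<le> n" by simp
    obtain J where J: "4^J \<le> n" "n < 4^(J+1)" using ex_power_ivl1[of 4 n] n2 by auto
    have J13: "13 \<le> J"
    proof (rule ccontr)
      assume "\<not> 13 \<le> J"
      then have "J + 1 \<le> 13" by simp
      then have "(4::nat)^(J+1) \<le> 4^13" by (rule power_increasing) simp
      then show False using J(2) nb by linarith
    qed
    have nbig: "n \<ge> 3000" using nb by simp
    have "(J - 6) * n \<le> 512 * card E"
      by (rule count_lemma[OF n2 r0 r1 hR sp e0 e1 nbig finE J(1)]) (use J13 in simp)
    then have "real ((J - 6) * n) \<le> real (512 * card E)" by (simp only: of_nat_le_iff)
    then have cnt: "(real J - 6) * real n \<le> 512 * real (card E)" using J13 by (simp add: of_nat_diff)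
    have "real n < real (4^(J+1))" using J(2) by (simp only: of_nat_less_iff)
    then have "ln (real n) < ln (4^(J+1))" using n2 by simp
    also have "ln ((4::real)^(J+1)) = real (J+1) * ln 4" by (rule ln_realpow)
    also have "ln (4::real) \<le> 3" using ln_le_minus_one[of 4] by simp
    then have "real (J+1) * ln 4 \<le> real (J+1) * 3" by (intro mult_left_mono) auto
    finally have lnJ: "ln (real n) \<le> 3 * (real J + 1)" by simp
    have "1 / 10^16 * real n * ln (real n) = real n * (ln (real n) / 10^16)" by simp
    also have "\<dots> \<le> real n * ((real J - 6) / 512)"
    proof (rule mult_left_mono)
      have "ln (real n) / 10^16 \<le> 3 * (real J + 1) / 10^16" using lnJ by (simp add: divide_right_mono)
      also have "\<dots> \<le> (real J - 6) / 512" using J13 by simp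
      finally show "ln (real n) / 10^16 \<le> (real J - 6) / 512" .
    qed simp
    also have "\<dots> \<le> real (card E)" using cnt by (simp add: field_simps)
    finally show ?thesis .
  qed
qed

end
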